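(* Let $\phi\colon\Sigma'\to\Sigma$ be a harmonic map of weighted metric graphs with boundary. Define $\phi^*f=f\circ\phi$ for $f\in\mathcal A^{0,0}(\Sigma,\partial\Sigma)$, $\phi^*(f_e\,d't_e)=(f_{\phi(e')}\circ\phi\;d_{e'}(\phi)\,d't_{e'})$, $\phi^*(f_e\,d''t_e)=(f_{\phi(e')}\circ\phi\;d_{e'}(\phi)\,d''t_{e'})$, and $\phi^*(f_e\,d't_ed''t_e)=(f_{\phi(e')}\circ\phi\;d_{e'}(\phi)^2\,d't_{e'}d''t_{e'})$, where the coefficient on $e'$ is taken to be $0$ if $\phi(e')$ is a vertex. Then $\phi^*$ maps $\mathcal A^{p,q}(\Sigma,\partial\Sigma)$ into $\mathcal A^{p,q}(\Sigma',\partial\Sigma')$ and is a homomorphism of bigraded differential algebras $\mathcal A^{\bullet,\bullet}(\Sigma,\partial\Sigma)\to\mathcal A^{\bullet,\bullet}(\Sigma',\partial\Sigma')$.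
   Context: Weighted metric graph with boundary $(\Sigma,\partial\Sigma)$: finite multigraph without loop edges, oriented edges $e$ with length $\ell(e)>0$, parametrization $t_e\colon[0,\ell(e)]\to e$ ($t_e(0)=e^-$, $t_{\bar e}(x)=t_e(\ell(e)-x)$), weight $w(e)=w(\bar e)\in\mathbb Z_{>0}$, boundary $\partial\Sigma\subset V(\Sigma)$; subdivisions allowed. Pair smoothness at a valency-2 vertex $v$ with outgoing $e_1,e_2$: $(f_1,f_2)$ smooth at $v$ iff $w(e_1)^n\frac{d^nf_1}{dt_{e_1}^n}(v)=(-1)^nw(e_2)^n\frac{d^nf_2}{dt_{e_2}^n}(v)$ for all $n\ge0$. $\mathcal A^{0,0}$: continuous $f$, smooth on edges, at interior $v$: constant near $v$ (valency 1), $(f|_{e_1},f|_{e_2})$ smooth at $v$ (valency 2), $\sum_{e^-=v}w(e)\frac{df}{dt_e}(v)=0$ (valency $\ge3$). $\mathcal A^{1,0}$/$\mathcal A^{0,1}$: $(f_e\,d't_e)$/$(f_e\,d''t_e)$ with $f_{\bar e}=-f_e$, zero near interior valency-1 vertices, $(w(e_1)f_{e_1},-w(e_2)f_{e_2})$ smooth at interior valency-2 vertices, $\sum_{e^-=v}w(e)f_e(v)=0$ at interior valency $\ge3$. $\mathcal A^{1,1}$: $(f_e\,d't_ed''t_e)$, $f_{\bar e}=f_e$, zero near interior valency-1 vertices, $(w(e_1)^2f_{e_1},w(e_2)^2f_{e_2})$ smooth at interior valency-2 vertices. $d',d''$: $d'f=(\frac{df}{dt_e}d't_e)$, $d''f=(\frac{df}{dt_e}d''t_e)$,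 $d''(f_e\,d't_e)=(-\frac{df_e}{dt_e}d't_ed''t_e)$, $d'(f_e\,d''t_e)=(\frac{df_e}{dt_e}d't_ed''t_e)$; wedge product $(f_e\,d't_e)\wedge(g_e\,d''t_e)=(f_eg_e\,d't_ed''t_e)$, alternating. Piecewise linear map: continuous, after subdivision vertices→vertices, edges→edges homeomorphically or →vertices, boundary condition (if $\phi(v')\in\partial\Sigma$ and $\phi$ nonconstant near $v'$ then $v'\in\partial\Sigma'$), $\phi\circ t_{e'}(x)=t_e(d_{e'}(\phi)x)$ with $d_{e'}(\phi)=\ell(e)/\ell(e')$. Harmonic: at each $v'\notin\partial\Sigma'$, $\sum_{e'^-=v',e'\mapsto e}\frac{w(e')}{w(e)}d_{e'}(\phi)$ independent of edge $e$ at $\phi(v')$. *)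

theory Defs
  imports "HOL-Analysis.Analysis"
begin

text \<open>A weighted metric graph with boundary, given combinatorially:
  vertices, oriented edges (the edge set is closed under reversal),
  the initial vertex e^- of an oriented edge, the reversal e -> e-bar,
  lengths, weights and the boundary vertex set.  A point t_e(x) of the edge e
  is described by the parameter x in [0, len e].\<close>

record ('v, 'e) wmgraph =
  verts :: "'v set"
  edges :: "'e set"
  src   :: "'e \<Rightarrow> 'v"
  rev   :: "'e \<Rightarrow> 'e"
  len   :: "'e \<Rightarrow> real"
  wt    :: "'e \<Rightarrow> nat"
  bdry  :: "'v set"

definition tgt :: "('v, 'e, 'z) wmgraph_scheme \<Rightarrow> 'e \<Rightarrow> 'v" where
  "tgt G e = src G (rev G e)"

definition is_wmgraph :: "('v, 'e, 'z) wmgraph_scheme \<Rightarrow> bool" where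
  "is_wmgraph G \<longleftrightarrow>
     finite (verts G) \<and> finite (edges G) \<and> bdry G \<subseteq> verts G \<and>
     (\<forall>e\<in>edges G.
        src G e \<in> verts G \<and> rev G e \<in> edges G \<and> rev G (rev G e) = e \<and>
        rev G e \<noteq> e \<and> tgt G e \<noteq> src G e \<and>
        len G e > 0 \<and> len G (rev G e) = len G e \<and>
        wt G e > 0 \<and> wt G (rev G e) = wt G e)"

definition out_edges :: "('v, 'e, 'z) wmgraph_scheme \<Rightarrow> 'v \<Rightarrow> 'e set" where
  "out_edges G v = {e \<in> edges G. src G e = v}"

definition valency :: "('v, 'e, 'z) wmgraph_scheme \<Rightarrow> 'v \<Rightarrow> nat" where
  "valency G v = card (out_edges G v)"

definition interior_verts :: "('v, 'e, 'z) wmgraph_scheme \<Rightarrow> 'v set" where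
  "interior_verts G = verts G - bdry G"

text \<open>Coefficient functions on an edge e are represented by functions
  real => real that are C-infinity on all of the real line; only their values
  on [0, len e] matter (a smooth function on a closed interval always admits
  a smooth extension).  Derivatives at e^- are derivatives at x = 0.\<close>

definition smooth_fun :: "(real \<Rightarrow> real) \<Rightarrow> bool" where
  "smooth_fun g \<longleftrightarrow> (\<forall>n x. (deriv ^^ n) g differentiable (at x))"

definition nderiv :: "nat \<Rightarrow> (real \<Rightarrow> real) \<Rightarrow> real \<Rightarrow> real" where
  "nderiv n g = (deriv ^^ n) g"

text \<open>Smoothness of a pair (f1, f2) at a valency-2 vertex with outgoing edges
  e1, e2 of weights w1, w2.\<close>

definition pair_smooth :: "nat \<Rightarrow> (real \<Rightarrow> real) \<Rightarrow> nat \<Rightarrow> (real \<Rightarrow> real) \<Rightarrow> bool" where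
  "pair_smooth w1 f1 w2 f2 \<longleftrightarrow>
     (\<forall>n. real w1 ^ n * nderiv n f1 0 = (-1) ^ n * real w2 ^ n * nderiv n f2 0)"

definition zero_near :: "real \<Rightarrow> (real \<Rightarrow> real) \<Rightarrow> bool" where
  "zero_near l g \<longleftrightarrow> (\<exists>\<epsilon>>0. \<forall>x\<in>{0..min \<epsilon> l}. g x = 0)"

definition const_near :: "real \<Rightarrow> (real \<Rightarrow> real) \<Rightarrow> bool" where
  "const_near l g \<longleftrightarrow> (\<exists>\<epsilon>>0. \<forall>x\<in>{0..min \<epsilon> l}. g x = g 0)"

type_synonym 'e coeffs = "'e \<Rightarrow> real \<Rightarrow> real"

text \<open>A (0,0)-form is a function on the metric graph: values at vertices
  together with the functions f o t_e on the edges.\<close>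

type_synonym ('v, 'e) form0 = "('v \<Rightarrow> real) \<times> 'e coeffs"

definition A00 :: "('v, 'e, 'z) wmgraph_scheme \<Rightarrow> ('v, 'e) form0 set" where
  "A00 G = {(fv, fe).
     (\<forall>e\<in>edges G. smooth_fun (fe e) \<and> fe e 0 = fv (src G e) \<and>
        (\<forall>x\<in>{0..len G e}. fe (rev G e) x = fe e (len G e - x))) \<and>
     (\<forall>v\<in>interior_verts G.
        (valency G v = 1 \<longrightarrow> (\<forall>e\<in>out_edges G v. const_near (len G e) (fe e))) \<and>
        (valency G v = 2 \<longrightarrow> (\<forall>e1\<in>out_edges G v. \<forall>e2\<in>out_edges G v. e1 \<noteq> e2 \<longrightarrow>
            pair_smooth (wt G e1) (fe e1) (wt G e2) (fe e2))) \<and>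
        (valency G v \<ge> 3 \<longrightarrow> (\<Sum>e\<in>out_edges G v. real (wt G e) * deriv (fe e) 0) = 0))}"

text \<open>Forms of type (1,0), resp. (0,1), are given by their coefficient family
  (f_e) in (f_e d't_e), resp. (f_e d''t_e).\<close>

definition A1_coeffs :: "('v, 'e, 'z) wmgraph_scheme \<Rightarrow> 'e coeffs set" where
  "A1_coeffs G = {f.
     (\<forall>e\<in>edges G. smooth_fun (f e) \<and>
        (\<forall>x\<in>{0..len G e}. f (rev G e) x = - f e (len G e - x))) \<and>
     (\<forall>v\<in>interior_verts G.
        (valency G v = 1 \<longrightarrow> (\<forall>e\<in>out_edges G v. zero_near (len G e) (f e))) \<and>
        (valency G v = 2 \<longrightarrow> (\<forall>e1\<in>out_edges G v. \<forall>e2\<in>out_edges G v. e1 \<noteq> e2 \<longrightarrow>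
            pair_smooth (wt G e1) (\<lambda>x. real (wt G e1) * f e1 x)
                        (wt G e2) (\<lambda>x. - real (wt G e2) * f e2 x))) \<and>
        (valency G v \<ge> 3 \<longrightarrow> (\<Sum>e\<in>out_edges G v. real (wt G e) * f e 0) = 0))}"

definition A10 :: "('v, 'e, 'z) wmgraph_scheme \<Rightarrow> 'e coeffs set" where
  "A10 G = A1_coeffs G"

definition A01 :: "('v, 'e, 'z) wmgraph_scheme \<Rightarrow> 'e coeffs set" where
  "A01 G = A1_coeffs G"

text \<open>Forms of type (1,1): coefficient family (f_e) in (f_e d't_e d''t_e).\<close>

definition A11 :: "('v, 'e, 'z) wmgraph_scheme \<Rightarrow> 'e coeffs set" where
  "A11 G = {f.
     (\<forall>e\<in>edges G. smooth_fun (f e) \<and>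
        (\<forall>x\<in>{0..len G e}. f (rev G e) x = f e (len G e - x))) \<and>
     (\<forall>v\<in>interior_verts G.
        (valency G v = 1 \<longrightarrow> (\<forall>e\<in>out_edges G v. zero_near (len G e) (f e))) \<and>
        (valency G v = 2 \<longrightarrow> (\<forall>e1\<in>out_edges G v. \<forall>e2\<in>out_edges G v. e1 \<noteq> e2 \<longrightarrow>
            pair_smooth (wt G e1) (\<lambda>x. real (wt G e1) ^ 2 * f e1 x)
                        (wt G e2) (\<lambda>x. real (wt G e2) ^ 2 * f e2 x))))}"

definition d'_00 :: "('v, 'e) form0 \<Rightarrow> 'e coeffs" where
  "d'_00 F = (\<lambda>e x. deriv (snd F e) x)"

definition d''_00 :: "('v, 'e) form0 \<Rightarrow> 'e coeffs" where
  "d''_00 F = (\<lambda>e x. deriv (snd F e) x)"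

text \<open>d''(f_e d't_e) = (- df_e/dt_e d't_e d''t_e)\<close>
definition d''_10 :: "'e coeffs \<Rightarrow> 'e coeffs" where
  "d''_10 f = (\<lambda>e x. - deriv (f e) x)"

text \<open>d'(f_e d''t_e) = (df_e/dt_e d't_e d''t_e)\<close>
definition d'_01 :: "'e coeffs \<Rightarrow> 'e coeffs" where
  "d'_01 f = (\<lambda>e x. deriv (f e) x)"

definition mult00 :: "('v, 'e) form0 \<Rightarrow> ('v, 'e) form0 \<Rightarrow> ('v, 'e) form0" where
  "mult00 F H = (\<lambda>v. fst F v * fst H v, \<lambda>e x. snd F e x * snd H e x)"

definition mult0 :: "('v, 'e) form0 \<Rightarrow> 'e coeffs \<Rightarrow> 'e coeffs" where
  "mult0 F a = (\<lambda>e x. snd F e x * a e x)"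

text \<open>(f_e d't_e) wedge (g_e d''t_e) = (f_e g_e d't_e d''t_e)\<close>
definition wedge_10_01 :: "'e coeffs \<Rightarrow> 'e coeffs \<Rightarrow> 'e coeffs" where
  "wedge_10_01 a b = (\<lambda>e x. a e x * b e x)"

definition lin0 :: "real \<Rightarrow> ('v, 'e) form0 \<Rightarrow> real \<Rightarrow> ('v, 'e) form0 \<Rightarrow> ('v, 'e) form0" where
  "lin0 a F b H = (\<lambda>v. a * fst F v + b * fst H v, \<lambda>e x. a * snd F e x + b * snd H e x)"

definition lin1 :: "real \<Rightarrow> 'e coeffs \<Rightarrow> real \<Rightarrow> 'e coeffs \<Rightarrow> 'e coeffs" where
  "lin1 a f b g = (\<lambda>e x. a * f e x + b * g e x)"

definition one0 :: "('v, 'e) form0" where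
  "one0 = (\<lambda>v. 1, \<lambda>e x. 1)"

text \<open>Equality of forms on a graph (only values on the graph matter).\<close>

definition eq_coeffs :: "('v, 'e, 'z) wmgraph_scheme \<Rightarrow> 'e coeffs \<Rightarrow> 'e coeffs \<Rightarrow> bool" where
  "eq_coeffs G f g \<longleftrightarrow> (\<forall>e\<in>edges G. \<forall>x\<in>{0..len G e}. f e x = g e x)"

definition eq_form0 :: "('v, 'e, 'z) wmgraph_scheme \<Rightarrow> ('v, 'e) form0 \<Rightarrow> ('v, 'e) form0 \<Rightarrow> bool" where
  "eq_form0 G F H \<longleftrightarrow> (\<forall>v\<in>verts G. fst F v = fst H v) \<and> eq_coeffs G (snd F) (snd H)"

text \<open>A piecewise linear map phi : G' -> G, with G, G' already subdivided so
  that phi maps vertices to vertices (phiV) and every edge e' either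
  homeomorphically onto an edge e (phiE e' = Some e), via
  phi(t_e'(x)) = t_e(d_e'(phi) x) with d_e'(phi) = len e / len e',
  or onto a vertex (phiE e' = None).\<close>

definition pl_map ::
  "('v2, 'e2, 'z2) wmgraph_scheme \<Rightarrow> ('v, 'e, 'z) wmgraph_scheme \<Rightarrow>
   ('v2 \<Rightarrow> 'v) \<Rightarrow> ('e2 \<Rightarrow> 'e option) \<Rightarrow> bool" where
  "pl_map G' G phiV phiE \<longleftrightarrow>
     (\<forall>v'\<in>verts G'. phiV v' \<in> verts G) \<and>
     (\<forall>e'\<in>edges G'.
        (case phiE e' of
           None \<Rightarrow> phiV (src G' e') = phiV (tgt G' e') \<and> phiE (rev G' e') = None
         | Some e \<Rightarrow> e \<in> edges G \<and> src G e = phiV (src G' e') \<and>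
                     phiE (rev G' e') = Some (rev G e))) \<and>
     (\<forall>v'\<in>verts G'. phiV v' \<in> bdry G \<and>
        (\<exists>e'\<in>out_edges G' v'. phiE e' \<noteq> None) \<longrightarrow> v' \<in> bdry G')"

definition dfac ::
  "('v2, 'e2, 'z2) wmgraph_scheme \<Rightarrow> ('v, 'e, 'z) wmgraph_scheme \<Rightarrow>
   ('e2 \<Rightarrow> 'e option) \<Rightarrow> 'e2 \<Rightarrow> real" where
  "dfac G' G phiE e' = (case phiE e' of None \<Rightarrow> 0 | Some e \<Rightarrow> len G e / len G' e')"

definition harmonic_map ::
  "('v2, 'e2, 'z2) wmgraph_scheme \<Rightarrow> ('v, 'e, 'z) wmgraph_scheme \<Rightarrow>
   ('v2 \<Rightarrow> 'v) \<Rightarrow> ('e2 \<Rightarrow> 'e option) \<Rightarrow> bool" where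
  "harmonic_map G' G phiV phiE \<longleftrightarrow>
     pl_map G' G phiV phiE \<and>
     (\<forall>v'\<in>verts G' - bdry G'. \<exists>c. \<forall>e\<in>out_edges G (phiV v').
        (\<Sum>e'\<in>{e'\<in>out_edges G' v'. phiE e' = Some e}.
            real (wt G' e') / real (wt G e) * dfac G' G phiE e') = c)"

definition pull0 ::
  "('v2, 'e2, 'z2) wmgraph_scheme \<Rightarrow> ('v, 'e, 'z) wmgraph_scheme \<Rightarrow>
   ('v2 \<Rightarrow> 'v) \<Rightarrow> ('e2 \<Rightarrow> 'e option) \<Rightarrow> ('v, 'e) form0 \<Rightarrow> ('v2, 'e2) form0" where
  "pull0 G' G phiV phiE F =
     (\<lambda>v'. fst F (phiV v'),
      \<lambda>e' x. (case phiE e' of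
                None \<Rightarrow> fst F (phiV (src G' e'))
              | Some e \<Rightarrow> snd F e (dfac G' G phiE e' * x)))"

definition pull1 ::
  "('v2, 'e2, 'z2) wmgraph_scheme \<Rightarrow> ('v, 'e, 'z) wmgraph_scheme \<Rightarrow>
   ('e2 \<Rightarrow> 'e option) \<Rightarrow> 'e coeffs \<Rightarrow> 'e2 coeffs" where
  "pull1 G' G phiE f =
     (\<lambda>e' x. (case phiE e' of
                None \<Rightarrow> 0
              | Some e \<Rightarrow> f e (dfac G' G phiE e' * x) * dfac G' G phiE e'))"

definition pull2 ::
  "('v2, 'e2, 'z2) wmgraph_scheme \<Rightarrow> ('v, 'e, 'z) wmgraph_scheme \<Rightarrow>
   ('e2 \<Rightarrow> 'e option) \<Rightarrow> 'e coeffs \<Rightarrow> 'e2 coeffs" where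
  "pull2 G' G phiE f =
     (\<lambda>e' x. (case phiE e' of
                None \<Rightarrow> 0
              | Some e \<Rightarrow> f e (dfac G' G phiE e' * x) * dfac G' G phiE e' ^ 2))"

end

theory Submission
  imports Defs
begin


lemma smooth_diff: "smooth_fun f \<Longrightarrow> DERIV ((deriv ^^ n) f) x :> deriv ((deriv ^^ n) f) x"
  unfolding smooth_fun_def using DERIV_deriv_iff_real_differentiable by blast

lemma deriv_scale:
  assumes "smooth_fun f"
  shows "(deriv ^^ n) (\<lambda>x. k * f (d*x)) = (\<lambda>x. k * d^n * (deriv ^^ n) f (d*x))"
proof (induction n)
  case 0 then show ?case by simp
next
  case (Suc n)
  have dd: "deriv (\<lambda>x. k * d^n * (deriv ^^ n) f (d*x)) y = k * d ^ Suc n * (deriv ^^ Suc n) f (d*y)" for y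
  proof -
    have "DERIV (\<lambda>x. (deriv ^^ n) f (d*x)) y :> deriv ((deriv ^^ n) f) (d*y) * d"
      by (rule DERIV_chain2[OF smooth_diff[OF assms]]) (auto intro!: derivative_eq_intros)
    then have "DERIV (\<lambda>x. k * d^n * (deriv ^^ n) f (d*x)) y :> k * d^n * (deriv ((deriv ^^ n) f) (d*y) * d)"
      by (rule DERIV_cmult)
    then show ?thesis by (simp add: DERIV_imp_deriv)
  qed
  have "(deriv ^^ Suc n) (\<lambda>x. k * f (d*x)) = deriv (\<lambda>x. k * d^n * (deriv ^^ n) f (d*x))"
    using Suc.IH by simp
  then show ?case using dd by (simp add: fun_eq_iff)
qed

lemma smooth_scale: "smooth_fun f \<Longrightarrow> smooth_fun (\<lambda>x. k * f (d*x))"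
proof -
  assume s: "smooth_fun f"
  show ?thesis unfolding smooth_fun_def deriv_scale[OF s]
  proof (intro allI)
    fix n x
    have "DERIV (\<lambda>x. (deriv ^^ n) f (d*x)) x :> deriv ((deriv ^^ n) f) (d*x) * d"
      by (rule DERIV_chain2[OF smooth_diff[OF s]]) (auto intro!: derivative_eq_intros)
    then have "DERIV (\<lambda>x. k * d^n * (deriv ^^ n) f (d*x)) x :> k * d^n * (deriv ((deriv ^^ n) f) (d*x) * d)"
      by (rule DERIV_cmult)
    then show "(\<lambda>x. k * d ^ n * (deriv ^^ n) f (d * x)) differentiable at x"
      using real_differentiable_def by blast
  qed
qed


lemma deriv_const_pow: "(deriv ^^ n) (\<lambda>_. c::real) = (\<lambda>_. if n = 0 then c else 0)"
  by (induction n) auto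

lemma smooth_const: "smooth_fun (\<lambda>_. c)"
  unfolding smooth_fun_def deriv_const_pow by simp

lemma nderiv_scale: "smooth_fun f \<Longrightarrow> nderiv n (\<lambda>x. k * f (d*x)) y = k * d^n * nderiv n f (d*y)"
  unfolding nderiv_def by (simp add: deriv_scale)

lemma nderiv_cmult: "smooth_fun f \<Longrightarrow> nderiv n (\<lambda>x. k * f x) y = k * nderiv n f y"
  using nderiv_scale[of f n k 1 y] by simp

lemma nderiv_const: "nderiv n (\<lambda>_. c) y = (if n = 0 then c else 0)"
  unfolding nderiv_def deriv_const_pow by simp

lemma deriv_zero_on_open:
  assumes "open S" "x \<in> S" "\<forall>y\<in>S. g y = (c::real)"
  shows "deriv g x = 0"
proof -
  have "DERIV (\<lambda>_. c) x :> 0" by simp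
  then have "DERIV g x :> 0"
    by (rule has_field_derivative_transform_within_open[OF _ assms(1,2)]) (use assms(3) in auto)
  then show ?thesis by (rule DERIV_imp_deriv)
qed


lemma const_near_derivs:
  assumes s: "smooth_fun f" and e: "\<epsilon> > 0" and "l > 0"
    and c: "\<forall>x\<in>{0..min \<epsilon> l}. f x = f 0"
  shows "nderiv (Suc n) f 0 = 0"
proof -
  define \<delta> where "\<delta> = min \<epsilon> l"
  have dp: "\<delta> > 0" using assms by (simp add: \<delta>_def)
  have inner: "\<forall>y\<in>{0<..<\<delta>}. (deriv ^^ Suc m) f y = 0" for m
  proof (induction m)
    case 0
    have cc: "\<forall>z\<in>{0<..<\<delta>}. f z = f 0" by (intro ballI c[rule_format]) (auto simp: \<delta>_def)
    show ?case
    proof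
      fix y assume y: "y \<in> {0<..<\<delta>}"
      have "deriv f y = 0" by (rule deriv_zero_on_open[OF _ y cc]) simp
      then show "(deriv ^^ Suc 0) f y = 0" by simp
    qed
  next
    case (Suc m)
    show ?case
    proof
      fix y assume y: "y \<in> {0<..<\<delta>}"
      have "deriv ((deriv ^^ Suc m) f) y = 0" by (rule deriv_zero_on_open[OF _ y Suc.IH]) simp
      then show "(deriv ^^ Suc (Suc m)) f y = 0" by simp
    qed
  qed
  let ?g = "(deriv ^^ Suc n) f"
  have "?g differentiable at 0" using s unfolding smooth_fun_def by blast
  then have "continuous (at 0) ?g" by (rule differentiable_imp_continuous_within)
  then have "continuous (at_right 0) ?g" using continuous_at_split by blast
  then have t1: "(?g \<longlongrightarrow> ?g 0) (at_right 0)" unfolding continuous_within .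
  have ev: "eventually (\<lambda>y. 0 = ?g y) (at_right 0)"
    using eventually_at_right_real[OF dp] by (rule eventually_mono) (use inner in auto)
  have t2: "(?g \<longlongrightarrow> 0) (at_right 0)"
    using tendsto_const by (rule Lim_transform_eventually) (rule ev)
  have "?g 0 = 0"
    using tendsto_unique[OF trivial_limit_at_right_real t1 t2] .
  then show ?thesis by (simp add: nderiv_def)
qed



lemma const_near_nderiv:
  "smooth_fun f \<Longrightarrow> const_near l f \<Longrightarrow> l > 0 \<Longrightarrow> nderiv (Suc n) f 0 = 0"
  unfolding const_near_def using const_near_derivs by blast

lemma zero_near_nderiv:
  assumes "smooth_fun f" "zero_near l f" "l > 0" shows "nderiv n f 0 = 0"
proof (cases n)
  case 0
  from assms(2) obtain \<epsilon> where "\<epsilon> > 0" "\<forall>x\<in>{0..min \<epsilon> l}. f x = 0" unfolding zero_near_def by blast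
  then have "f 0 = 0" using assms(3) by auto
  then show ?thesis using 0 by (simp add: nderiv_def)
next
  case (Suc m)
  from assms(2) obtain \<epsilon> where e: "\<epsilon> > 0" "\<forall>x\<in>{0..min \<epsilon> l}. f x = 0" unfolding zero_near_def by blast
  then have "f 0 = 0" using assms(3) by auto
  then have "const_near l f" unfolding const_near_def using e by auto
  then show ?thesis using Suc const_near_nderiv assms by blast
qed

lemma zero_near_scale:
  assumes "zero_near L g" "d > 0" "d * l = L"
  shows "zero_near l (\<lambda>x. g (d*x) * k)"
proof -
  from assms(1) obtain \<epsilon> where e: "\<epsilon> > 0" "\<forall>x\<in>{0..min \<epsilon> L}. g x = 0" unfolding zero_near_def by blast
  have "\<forall>x\<in>{0..min (\<epsilon>/d) l}. g (d*x) * k = 0"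
  proof
    fix x assume x: "x \<in> {0..min (\<epsilon>/d) l}"
    have "d*x \<le> \<epsilon>" using x assms(2) by (auto simp: field_simps)
    moreover have "d*x \<le> L" using x assms(2,3) by (auto intro: mult_left_mono)
    moreover have "0 \<le> d*x" using x assms(2) by auto
    ultimately show "g (d*x) * k = 0" using e(2) by auto
  qed
  then show ?thesis unfolding zero_near_def using e(1) assms(2) by (intro exI[of _ "\<epsilon>/d"]) auto
qed

lemma const_near_scale:
  assumes "const_near L g" "d > 0" "d * l = L"
  shows "const_near l (\<lambda>x. g (d*x))"
proof -
  from assms(1) obtain \<epsilon> where e: "\<epsilon> > 0" "\<forall>x\<in>{0..min \<epsilon> L}. g x = g 0" unfolding const_near_def by blast
  have "\<forall>x\<in>{0..min (\<epsilon>/d) l}. g (d*x) = g (d*0)"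
  proof
    fix x assume x: "x \<in> {0..min (\<epsilon>/d) l}"
    have "d*x \<le> \<epsilon>" using x assms(2) by (auto simp: field_simps)
    moreover have "d*x \<le> L" using x assms(2,3) by (auto intro: mult_left_mono)
    moreover have "0 \<le> d*x" using x assms(2) by auto
    ultimately have "d*x \<in> {0..min \<epsilon> L}" by auto
    then show "g (d*x) = g (d*0)" using e(2) by (simp only: mult_zero_right)
  qed
  then show ?thesis unfolding const_near_def using e(1) assms(2) by (intro exI[of _ "\<epsilon>/d"]) auto
qed

lemma deriv_scale1: "smooth_fun f \<Longrightarrow> deriv (\<lambda>x. k * f (d*x)) y = k * d * deriv f (d*y)"
  using deriv_scale[of f "Suc 0" k d] by (simp add: fun_eq_iff)

lemma pair_alg:
  fixes w1 w2 w1' w2' d1 d2 c k :: real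
  assumes "\<forall>n. w1^n * X n = (-1)^n * w2^n * Y n" "w1' * d1 = c * w1" "w2' * d2 = c * w2"
  shows "w1'^n * (k * d1^n * X n) = (-1)^n * w2'^n * (k * d2^n * Y n)"
proof -
  have a: "w1'^n * d1^n = c^n * w1^n" using assms(2) by (metis power_mult_distrib)
  have b: "w2'^n * d2^n = c^n * w2^n" using assms(3) by (metis power_mult_distrib)
  have "w1'^n * (k * d1^n * X n) = k * c^n * (w1^n * X n)" using a by (simp add: algebra_simps)
  also have "\<dots> = k * c^n * ((-1)^n * w2^n * Y n)" using assms(1) by simp
  also have "\<dots> = (-1)^n * (w2'^n * d2^n) * k * Y n" using b by (simp add: algebra_simps)
  finally show ?thesis by (simp add: algebra_simps)
qed



context
  fixes G :: "('v, 'e) wmgraph" and G' :: "('v2, 'e2) wmgraph"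
    and phiV :: "'v2 \<Rightarrow> 'v" and phiE :: "'e2 \<Rightarrow> 'e option"
  assumes wG: "is_wmgraph G" and wG': "is_wmgraph G'"
    and harm: "harmonic_map G' G phiV phiE"
begin

lemma pl: "pl_map G' G phiV phiE" using harm unfolding harmonic_map_def by blast

lemma someE:
  assumes "e' \<in> edges G'" "phiE e' = Some e"
  shows "e \<in> edges G \<and> src G e = phiV (src G' e') \<and> phiE (rev G' e') = Some (rev G e)"
proof -
  have "case phiE e' of
           None \<Rightarrow> phiV (src G' e') = phiV (tgt G' e') \<and> phiE (rev G' e') = None
         | Some e \<Rightarrow> e \<in> edges G \<and> src G e = phiV (src G' e') \<and>
                     phiE (rev G' e') = Some (rev G e)"
    using pl assms(1) unfolding pl_map_def by blast
  then show ?thesis using assms(2) by simp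
qed

lemma noneE:
  assumes "e' \<in> edges G'" "phiE e' = None"
  shows "phiV (src G' e') = phiV (tgt G' e') \<and> phiE (rev G' e') = None"
proof -
  have "case phiE e' of
           None \<Rightarrow> phiV (src G' e') = phiV (tgt G' e') \<and> phiE (rev G' e') = None
         | Some e \<Rightarrow> e \<in> edges G \<and> src G e = phiV (src G' e') \<and>
                     phiE (rev G' e') = Some (rev G e)"
    using pl assms(1) unfolding pl_map_def by blast
  then show ?thesis using assms(2) by simp
qed

lemma dfac_some:
  assumes "e' \<in> edges G'" "phiE e' = Some e"
  shows "dfac G' G phiE e' = len G e / len G' e' \<and> dfac G' G phiE e' > 0 \<and>
    dfac G' G phiE e' * len G' e' = len G e \<and> dfac G' G phiE (rev G' e') = dfac G' G phiE e'"
proof -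
  have e: "e \<in> edges G" "phiE (rev G' e') = Some (rev G e)" using someE[OF assms] by auto
  have l': "len G' e' > 0" "len G' (rev G' e') = len G' e'" using wG' assms(1) unfolding is_wmgraph_def by auto
  have l: "len G e > 0" "len G (rev G e) = len G e" using wG e(1) unfolding is_wmgraph_def by auto
  show ?thesis using l l' e assms(2) by (simp add: dfac_def)
qed

lemma dfac_none: "phiE e' = None \<Longrightarrow> dfac G' G phiE e' = 0"
  by (simp add: dfac_def)

lemma fin_out': "finite (out_edges G' v')"
  using wG' unfolding is_wmgraph_def out_edges_def by auto

lemma fin_out: "finite (out_edges G v)"
  using wG unfolding is_wmgraph_def out_edges_def by auto

lemma int_img:
  assumes "v' \<in> interior_verts G'" "e' \<in> out_edges G' v'" "phiE e' = Some e"
  shows "phiV v' \<in> interior_verts G \<and> e \<in> out_edges G (phiV v')"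
proof -
  have e': "e' \<in> edges G'" "src G' e' = v'" using assms(2) by (auto simp: out_edges_def)
  have v': "v' \<in> verts G'" "v' \<notin> bdry G'" using assms(1) by (auto simp: interior_verts_def)
  have "phiV v' \<in> verts G" using pl v' unfolding pl_map_def by blast
  moreover have "phiV v' \<notin> bdry G"
  proof
    assume "phiV v' \<in> bdry G"
    then have "v' \<in> bdry G'" using pl v'(1) assms(2,3) unfolding pl_map_def by blast
    then show False using v' by blast
  qed
  moreover have "e \<in> out_edges G (phiV v')" using someE[OF e'(1) assms(3)] e' by (auto simp: out_edges_def)
  ultimately show ?thesis by (simp add: interior_verts_def)
qed

definition img :: "'v2 \<Rightarrow> 'e set" where
  "img v' = {e. \<exists>e'\<in>out_edges G' v'. phiE e' = Some e}"

lemma harm_key: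
  assumes "v' \<in> interior_verts G'" "e0' \<in> out_edges G' v'" "phiE e0' = Some e0"
  shows "\<exists>c>0. out_edges G (phiV v') = img v' \<and>
     (\<forall>e\<in>out_edges G (phiV v').
        (\<Sum>e'\<in>{e'\<in>out_edges G' v'. phiE e' = Some e}.
            real (wt G' e') / real (wt G e) * dfac G' G phiE e') = c)"
proof -
  have "v' \<in> verts G' - bdry G'" using assms(1) by (simp add: interior_verts_def)
  then obtain c where c: "\<forall>e\<in>out_edges G (phiV v').
        (\<Sum>e'\<in>{e'\<in>out_edges G' v'. phiE e' = Some e}.
            real (wt G' e') / real (wt G e) * dfac G' G phiE e') = c"
    using harm unfolding harmonic_map_def by blast
  have pos: "real (wt G' e') / real (wt G e) * dfac G' G phiE e' > 0"
    if "e' \<in> out_edges G' v'" "phiE e' = Some e" for e' e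
  proof -
    have e': "e' \<in> edges G'" using that by (simp add: out_edges_def)
    have "e \<in> edges G" using someE[OF e' that(2)] by simp
    then have "wt G e > 0" using wG unfolding is_wmgraph_def by auto
    moreover have "wt G' e' > 0" using wG' e' unfolding is_wmgraph_def by auto
    moreover have "dfac G' G phiE e' > 0" using dfac_some[OF e' that(2)] by blast
    ultimately show ?thesis by (intro mult_pos_pos divide_pos_pos) auto
  qed
  have sumpos: "(\<Sum>e'\<in>{e'\<in>out_edges G' v'. phiE e' = Some e}.
            real (wt G' e') / real (wt G e) * dfac G' G phiE e') > 0"
    if "e \<in> img v'" for e
  proof -
    have "\<exists>e'\<in>out_edges G' v'. phiE e' = Some e" using that unfolding img_def by blast
    then obtain e' where e': "e' \<in> out_edges G' v'" "phiE e' = Some e" by blast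
    show ?thesis
      by (rule sum_pos2[of _ e']) (use e' fin_out' pos in \<open>auto intro: less_imp_le\<close>)
  qed
  have sub: "img v' \<subseteq> out_edges G (phiV v')" using int_img[OF assms(1)] by (auto simp: img_def)
  have e0: "e0 \<in> img v'" using assms(2,3) by (auto simp: img_def)
  have cpos: "c > 0" using c sumpos[OF e0] sub e0 by auto
  have "out_edges G (phiV v') \<subseteq> img v'"
  proof
    fix e assume e: "e \<in> out_edges G (phiV v')"
    show "e \<in> img v'"
    proof (rule ccontr)
      assume "e \<notin> img v'"
      then have emp: "{e'\<in>out_edges G' v'. phiE e' = Some e} = {}" by (auto simp: img_def)
      have cc:  "(\<Sum>e'\<in>{e'\<in>out_edges G' v'. phiE e' = Some e}.
            real (wt G' e') / real (wt G e) * dfac G' G phiE e') = c" using c e by blast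
      have "c = 0" using cc unfolding emp by simp
      then show False using cpos by simp
    qed
  qed
  then show ?thesis using sub c cpos by (intro exI[of _ c]) auto
qed


lemma harm_out:
  assumes "v' \<in> interior_verts G'" "e0' \<in> out_edges G' v'" "phiE e0' = Some e0"
  shows "out_edges G (phiV v') = img v'"
  using harm_key[OF assms] by auto

lemma out'_sub: "e' \<in> out_edges G' v' \<Longrightarrow> e' \<in> edges G' \<and> src G' e' = v'"
  by (simp add: out_edges_def)

lemma wpos: "e \<in> edges G \<Longrightarrow> wt G e > 0" using wG unfolding is_wmgraph_def by auto
lemma wpos': "e' \<in> edges G' \<Longrightarrow> wt G' e' > 0" using wG' unfolding is_wmgraph_def by auto

lemma val1:
  assumes "v' \<in> interior_verts G'" "valency G' v' = 1" "e' \<in> out_edges G' v'" "phiE e' = Some e"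
  shows "phiV v' \<in> interior_verts G \<and> valency G (phiV v') = 1 \<and> out_edges G (phiV v') = {e}"
proof -
  have o: "out_edges G' v' = {e'}" using assms(2,3) unfolding valency_def
    by (metis card_1_singletonE singletonD)
  have "out_edges G (phiV v') = img v'" using harm_out[OF assms(1,3,4)] .
  moreover have "img v' = {e}" using o assms(4) by (auto simp: img_def)
  ultimately show ?thesis using int_img[OF assms(1,3,4)] by (simp add: valency_def)
qed

definition deg :: "'v2 \<Rightarrow> 'e2 \<Rightarrow> bool" where
  "deg v' e' \<longleftrightarrow> phiE e' = None \<or> (phiV v' \<in> interior_verts G \<and> valency G (phiV v') = 1 \<and>
      (\<exists>e. phiE e' = Some e \<and> out_edges G (phiV v') = {e}))"

lemma val2:
  assumes v: "v' \<in> interior_verts G'" and "valency G' v' = 2" and e1': "e1' \<in> out_edges G' v'"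
    and e2': "e2' \<in> out_edges G' v'" and ne: "e1' \<noteq> e2'"
  shows "(deg v' e1' \<and> deg v' e2') \<or>
    (\<exists>e1 e2 c. phiE e1' = Some e1 \<and> phiE e2' = Some e2 \<and> e1 \<noteq> e2 \<and>
       phiV v' \<in> interior_verts G \<and> valency G (phiV v') = 2 \<and> out_edges G (phiV v') = {e1, e2} \<and>
       real (wt G' e1') * dfac G' G phiE e1' = c * real (wt G e1) \<and>
       real (wt G' e2') * dfac G' G phiE e2' = c * real (wt G e2))"
proof -
  have o: "out_edges G' v' = {e1', e2'}"
  proof -
    have "{e1', e2'} \<subseteq> out_edges G' v'" using e1' e2' by auto
    moreover have "card {e1', e2'} = card (out_edges G' v')" using assms(2) ne by (simp add: valency_def)
    ultimately show ?thesis using fin_out' card_subset_eq by blast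
  qed
  show ?thesis
  proof (cases "phiE e1'")
    case None
    show ?thesis
    proof (cases "phiE e2'")
      case None2: None
      then show ?thesis using None by (simp add: deg_def)
    next
      case (Some e2)
      have "out_edges G (phiV v') = img v'" using harm_out[OF v e2' Some] .
      moreover have "img v' = {e2}" using o None Some by (auto simp: img_def)
      ultimately show ?thesis using int_img[OF v e2' Some] None Some by (simp add: valency_def deg_def)
    qed
  next
    case (Some e1)
    note S1 = Some
    show ?thesis
    proof (cases "phiE e2'")
      case None
      have "out_edges G (phiV v') = img v'" using harm_out[OF v e1' S1] .
      moreover have "img v' = {e1}" using o None S1 by (auto simp: img_def)
      ultimately show ?thesis using int_img[OF v e1' S1] None S1 by (simp add: valency_def deg_def)
    next
      case (Some e2)
      obtain c where c: "c>0" "out_edges G (phiV v') = img v'"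
        "\<forall>e\<in>out_edges G (phiV v').
        (\<Sum>e'\<in>{e'\<in>out_edges G' v'. phiE e' = Some e}.
            real (wt G' e') / real (wt G e) * dfac G' G phiE e') = c"
        using harm_key[OF v e1' S1] by blast
      have im: "img v' = {e1, e2}" using o S1 Some by (auto simp: img_def)
      have iv: "phiV v' \<in> interior_verts G" using int_img[OF v e1' S1] by blast
      show ?thesis
      proof (cases "e1 = e2")
        case True
        then show ?thesis using c(2) im iv S1 Some by (simp add: valency_def deg_def)
      next
        case False
        have s1: "{e'\<in>out_edges G' v'. phiE e' = Some e1} = {e1'}" using o S1 Some False by auto
        have s2: "{e'\<in>out_edges G' v'. phiE e' = Some e2} = {e2'}" using o S1 Some False by auto
        have q1: "real (wt G' e1') / real (wt G e1) * dfac G' G phiE e1' = c"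
          using c(3) s1 c(2) im by auto
        have q2: "real (wt G' e2') / real (wt G e2) * dfac G' G phiE e2' = c"
          using c(3) s2 c(2) im by auto
        have w1: "wt G e1 > 0" "wt G e2 > 0" using wpos c(2) im by (auto simp: out_edges_def)
        have "real (wt G' e1') * dfac G' G phiE e1' = c * real (wt G e1)"
          using q1 w1 by (simp add: field_simps)
        moreover have "real (wt G' e2') * dfac G' G phiE e2' = c * real (wt G e2)"
          using q2 w1 by (simp add: field_simps)
        ultimately show ?thesis using c(2) im iv S1 Some False
          by (intro disjI2 exI[of _ e1] exI[of _ e2] exI[of _ c]) (simp add: valency_def)
      qed
    qed
  qed
qed

lemma regroup:
  assumes v: "v' \<in> interior_verts G'"
    and h: "phiV v' \<in> interior_verts G \<Longrightarrow> (\<Sum>e\<in>out_edges G (phiV v'). real (wt G e) * h e) = 0"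
  shows "(\<Sum>e'\<in>out_edges G' v'. (case phiE e' of None \<Rightarrow> 0
      | Some e \<Rightarrow> real (wt G' e') * dfac G' G phiE e' * h e)) = 0"
proof (cases "\<forall>e'\<in>out_edges G' v'. phiE e' = None")
  case True
  then show ?thesis by (intro sum.neutral) auto
next
  case False
  then obtain e0' e0 where e0: "e0' \<in> out_edges G' v'" "phiE e0' = Some e0" by auto
  obtain c where c: "c>0" "out_edges G (phiV v') = img v'"
        "\<forall>e\<in>out_edges G (phiV v').
        (\<Sum>e'\<in>{e'\<in>out_edges G' v'. phiE e' = Some e}.
            real (wt G' e') / real (wt G e) * dfac G' G phiE e') = c"
    using harm_key[OF v e0] by blast
  have iv: "phiV v' \<in> interior_verts G" using int_img[OF v e0] by blast
  let ?O = "out_edges G (phiV v')"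
  let ?T = "\<lambda>e'. (case phiE e' of None \<Rightarrow> 0
      | Some e \<Rightarrow> real (wt G' e') * dfac G' G phiE e' * h e)"
  have sub: "phiE ` out_edges G' v' \<subseteq> insert None (Some ` ?O)"
  proof
    fix y assume "y \<in> phiE ` out_edges G' v'"
    then obtain e' where e': "e' \<in> out_edges G' v'" "y = phiE e'" by auto
    show "y \<in> insert None (Some ` ?O)"
    proof (cases "phiE e'")
      case None then show ?thesis using e' by simp
    next
      case (Some e) then show ?thesis using e' int_img[OF v e'(1) Some] by auto
    qed
  qed
  have "(\<Sum>e'\<in>out_edges G' v'. ?T e') =
     (\<Sum>y\<in>insert None (Some ` ?O). \<Sum>e'\<in>{x. x \<in> out_edges G' v' \<and> phiE x = y}. ?T e')"
    by (rule sum.group[symmetric]) (use fin_out' fin_out sub in auto)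
  also have "\<dots> = (\<Sum>y\<in>Some ` ?O. \<Sum>e'\<in>{x. x \<in> out_edges G' v' \<and> phiE x = y}. ?T e')"
  proof -
    have "(\<Sum>e'\<in>{x. x \<in> out_edges G' v' \<and> phiE x = None}. ?T e') = 0"
      by (intro sum.neutral) auto
    moreover have "None \<notin> Some ` ?O" by auto
    ultimately show ?thesis using fin_out by (simp add: sum.insert)
  qed
  also have "\<dots> = (\<Sum>e\<in>?O. \<Sum>e'\<in>{x. x \<in> out_edges G' v' \<and> phiE x = Some e}. ?T e')"
    by (simp add: sum.reindex)
  also have "\<dots> = (\<Sum>e\<in>?O. \<Sum>e'\<in>{x. x \<in> out_edges G' v' \<and> phiE x = Some e}.
       (real (wt G' e') / real (wt G e) * dfac G' G phiE e') * (real (wt G e) * h e))"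
  proof (intro sum.cong refl)
    fix e e' assume e: "e \<in> ?O" and e': "e' \<in> {x. x \<in> out_edges G' v' \<and> phiE x = Some e}"
    have "wt G e > 0" using e wpos by (auto simp: out_edges_def)
    then show "?T e' = (real (wt G' e') / real (wt G e) * dfac G' G phiE e') * (real (wt G e) * h e)"
      using e' by simp
  qed
  also have "\<dots> = (\<Sum>e\<in>?O. c * (real (wt G e) * h e))"
  proof (intro sum.cong refl)
    fix e assume e: "e \<in> ?O"
    have "(\<Sum>e'\<in>{x. x \<in> out_edges G' v' \<and> phiE x = Some e}.
       (real (wt G' e') / real (wt G e) * dfac G' G phiE e') * (real (wt G e) * h e)) =
      (\<Sum>e'\<in>{x. x \<in> out_edges G' v' \<and> phiE x = Some e}.
       (real (wt G' e') / real (wt G e) * dfac G' G phiE e')) * (real (wt G e) * h e)"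
      by (simp only: sum_distrib_right)
    also have "\<dots> = c * (real (wt G e) * h e)" using c(3) e by simp
    finally show "(\<Sum>e'\<in>{x. x \<in> out_edges G' v' \<and> phiE x = Some e}.
       (real (wt G' e') / real (wt G e) * dfac G' G phiE e') * (real (wt G e) * h e)) =
       c * (real (wt G e) * h e)" .
  qed
  also have "\<dots> = c * (\<Sum>e\<in>?O. real (wt G e) * h e)" by (simp add: sum_distrib_left)
  also have "\<dots> = 0" using h iv by simp
  finally show ?thesis .
qed


lemma val_cases:
  obtains "out_edges G v = {}" | a where "valency G v = 1" "out_edges G v = {a}"
  | a b where "valency G v = 2" "out_edges G v = {a, b}" "a \<noteq> b" | "valency G v \<ge> 3"
proof -
  have "valency G v = 0 \<or> valency G v = 1 \<or> valency G v = 2 \<or> valency G v \<ge> 3" by arith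
  then show ?thesis
  proof (elim disjE)
    assume "valency G v = 0" then show ?thesis using that(1) fin_out by (simp add: valency_def)
  next
    assume a: "valency G v = 1" then show ?thesis using that(2) by (metis card_1_singletonE valency_def)
  next
    assume a: "valency G v = 2" then show ?thesis using that(3) by (metis card_2_iff valency_def)
  qed (use that in auto)
qed

lemma van00:
  assumes F: "(fv, fe) \<in> A00 G" and v: "v \<in> interior_verts G"
  shows "(\<Sum>e\<in>out_edges G v. real (wt G e) * deriv (fe e) 0) = 0"
proof -
  have FE: "\<forall>e\<in>edges G. smooth_fun (fe e)" using F by (simp add: A00_def)
  have FV: "(valency G v = 1 \<longrightarrow> (\<forall>e\<in>out_edges G v. const_near (len G e) (fe e))) \<and>
        (valency G v = 2 \<longrightarrow> (\<forall>e1\<in>out_edges G v. \<forall>e2\<in>out_edges G v. e1 \<noteq> e2 \<longrightarrow>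
            pair_smooth (wt G e1) (fe e1) (wt G e2) (fe e2))) \<and>
        (valency G v \<ge> 3 \<longrightarrow> (\<Sum>e\<in>out_edges G v. real (wt G e) * deriv (fe e) 0) = 0)"
    using F v by (simp add: A00_def)
  show ?thesis
  proof (cases rule: val_cases[of v])
    case 1 then show ?thesis by simp
  next
    case (2 a)
    have a: "a \<in> edges G" using 2 by (auto simp: out_edges_def)
    have "const_near (len G a) (fe a)" using FV 2 by simp
    moreover have "len G a > 0" using wG a unfolding is_wmgraph_def by auto
    ultimately have "nderiv (Suc 0) (fe a) 0 = 0" using const_near_nderiv FE a by blast
    then show ?thesis using 2 by (simp add: nderiv_def)
  next
    case (3 a b)
    have "pair_smooth (wt G a) (fe a) (wt G b) (fe b)" using FV 3 by simp
    then have "real (wt G a) ^ 1 * nderiv 1 (fe a) 0 = (-1) ^ 1 * real (wt G b) ^ 1 * nderiv 1 (fe b) 0"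
      unfolding pair_smooth_def by blast
    then show ?thesis using 3 by (simp add: nderiv_def)
  next
    case 4 then show ?thesis using FV by simp
  qed
qed

lemma van1:
  assumes F: "f \<in> A1_coeffs G" and v: "v \<in> interior_verts G"
  shows "(\<Sum>e\<in>out_edges G v. real (wt G e) * f e 0) = 0"
proof -
  have FE: "\<forall>e\<in>edges G. smooth_fun (f e)" using F by (simp add: A1_coeffs_def)
  have FV: "(valency G v = 1 \<longrightarrow> (\<forall>e\<in>out_edges G v. zero_near (len G e) (f e))) \<and>
        (valency G v = 2 \<longrightarrow> (\<forall>e1\<in>out_edges G v. \<forall>e2\<in>out_edges G v. e1 \<noteq> e2 \<longrightarrow>
            pair_smooth (wt G e1) (\<lambda>x. real (wt G e1) * f e1 x)
                        (wt G e2) (\<lambda>x. - real (wt G e2) * f e2 x))) \<and>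
        (valency G v \<ge> 3 \<longrightarrow> (\<Sum>e\<in>out_edges G v. real (wt G e) * f e 0) = 0)"
    using F v by (simp add: A1_coeffs_def)
  show ?thesis
  proof (cases rule: val_cases[of v])
    case 1 then show ?thesis by simp
  next
    case (2 a)
    have a: "a \<in> edges G" using 2 by (auto simp: out_edges_def)
    have "zero_near (len G a) (f a)" using FV 2 by simp
    moreover have "len G a > 0" using wG a unfolding is_wmgraph_def by auto
    ultimately have "nderiv 0 (f a) 0 = 0" using zero_near_nderiv FE a by blast
    then show ?thesis using 2 by (simp add: nderiv_def)
  next
    case (3 a b)
    have "pair_smooth (wt G a) (\<lambda>x. real (wt G a) * f a x) (wt G b) (\<lambda>x. - real (wt G b) * f b x)"
      using FV 3 by simp
    then have "real (wt G a) ^ 0 * nderiv 0 (\<lambda>x. real (wt G a) * f a x) 0 =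
       (-1) ^ 0 * real (wt G b) ^ 0 * nderiv 0 (\<lambda>x. - real (wt G b) * f b x) 0"
      unfolding pair_smooth_def by blast
    then show ?thesis using 3 by (simp add: nderiv_def)
  next
    case 4 then show ?thesis using FV by simp
  qed
qed


lemma pull0_A00:
  assumes F: "(fv, fe) \<in> A00 G"
  shows "pull0 G' G phiV phiE (fv, fe) \<in> A00 G'"
proof -
  define P where "P = snd (pull0 G' G phiV phiE (fv, fe))"
  have Ps: "P e' = (\<lambda>x. fe e (dfac G' G phiE e' * x))" if "phiE e' = Some e" for e' e
    using that by (simp add: P_def pull0_def)
  have Pn: "P e' = (\<lambda>x. fv (phiV (src G' e')))" if "phiE e' = None" for e'
    using that by (simp add: P_def pull0_def)
  have eq: "pull0 G' G phiV phiE (fv, fe) = ((\<lambda>v'. fv (phiV v')), P)" by (simp add: pull0_def P_def)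
  have FE: "\<forall>e\<in>edges G. smooth_fun (fe e) \<and> fe e 0 = fv (src G e) \<and>
        (\<forall>x\<in>{0..len G e}. fe (rev G e) x = fe e (len G e - x))" using F by (simp add: A00_def)
  have FV: "\<forall>v\<in>interior_verts G.
        (valency G v = 1 \<longrightarrow> (\<forall>e\<in>out_edges G v. const_near (len G e) (fe e))) \<and>
        (valency G v = 2 \<longrightarrow> (\<forall>e1\<in>out_edges G v. \<forall>e2\<in>out_edges G v. e1 \<noteq> e2 \<longrightarrow>
            pair_smooth (wt G e1) (fe e1) (wt G e2) (fe e2))) \<and>
        (valency G v \<ge> 3 \<longrightarrow> (\<Sum>e\<in>out_edges G v. real (wt G e) * deriv (fe e) 0) = 0)"
    using F by (simp add: A00_def)
  have E: "smooth_fun (P e') \<and> P e' 0 = fv (phiV (src G' e')) \<and>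
     (\<forall>x\<in>{0..len G' e'}. P (rev G' e') x = P e' (len G' e' - x))" if e': "e' \<in> edges G'" for e'
  proof (cases "phiE e'")
    case None
    have n: "phiV (src G' e') = phiV (tgt G' e')" "phiE (rev G' e') = None" using noneE[OF e' None] by auto
    show ?thesis using smooth_const n None Pn[OF None] Pn[OF n(2)] by (simp add: tgt_def)
  next
    case (Some e)
    have s: "e \<in> edges G" "src G e = phiV (src G' e')" "phiE (rev G' e') = Some (rev G e)"
      using someE[OF e' Some] by auto
    have d: "dfac G' G phiE e' > 0" "dfac G' G phiE e' * len G' e' = len G e"
       "dfac G' G phiE (rev G' e') = dfac G' G phiE e'" using dfac_some[OF e' Some] by auto
    have sm: "smooth_fun (fe e)" using FE s(1) by blast
    have "smooth_fun (\<lambda>x. 1 * fe e (dfac G' G phiE e' * x))" by (rule smooth_scale[OF sm])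
    then have 1: "smooth_fun (P e')" using Ps[OF Some] by simp
    have 2: "P e' 0 = fv (phiV (src G' e'))" using Ps[OF Some] FE s by simp
    have 3: "P (rev G' e') x = P e' (len G' e' - x)" if x: "x \<in> {0..len G' e'}" for x
    proof -
      let ?d = "dfac G' G phiE e'"
      have x0: "0 \<le> x" "x \<le> len G' e'" using x by auto
      have "?d * x \<le> ?d * len G' e'" using x0 d(1) by (intro mult_left_mono) auto
      then have "?d * x \<in> {0..len G e}" using d x0 by auto
      then have "fe (rev G e) (?d * x) = fe e (len G e - ?d * x)" using FE s(1) by blast
      moreover have "len G e - ?d * x = ?d * (len G' e' - x)" using d(2) by (simp add: algebra_simps)
      ultimately show ?thesis using Ps[OF Some] Ps[OF s(3)] d(3) by simp
    qed
    show ?thesis using 1 2 3 by blast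
  qed
  have P0: "P e' 0 = fv (phiV v')" if "e' \<in> out_edges G' v'" for e' v'
    using E[of e'] that by (auto simp: out_edges_def)
  have Pd: "nderiv (Suc m) (P e') 0 = 0" if "e' \<in> out_edges G' v'" "deg v' e'" for e' v' m
  proof (cases "phiE e'")
    case None then show ?thesis using Pn[OF None] by (simp add: nderiv_const)
  next
    case (Some e)
    have e': "e' \<in> edges G'" using that by (simp add: out_edges_def)
    have o: "phiV v' \<in> interior_verts G" "valency G (phiV v') = 1" "out_edges G (phiV v') = {e}"
      using that(2) Some by (auto simp: deg_def)
    have "const_near (len G e) (fe e)" using FV o by auto
    moreover have ee: "e \<in> edges G" using someE[OF e' Some] by simp
    moreover have "len G e > 0" using wG ee unfolding is_wmgraph_def by auto
    moreover have sm: "smooth_fun (fe e)" using FE ee by blast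
    ultimately have z: "nderiv (Suc m) (fe e) 0 = 0" using const_near_nderiv by blast
    have "nderiv (Suc m) (\<lambda>x. 1 * fe e (dfac G' G phiE e' * x)) 0 = 0"
      using nderiv_scale[OF sm, of "Suc m" 1 "dfac G' G phiE e'" 0] z by simp
    then show ?thesis using Ps[OF Some] by simp
  qed
  have V1: "\<forall>e'\<in>out_edges G' v'. const_near (len G' e') (P e')"
    if v: "v' \<in> interior_verts G'" and val: "valency G' v' = 1" for v'
  proof
    fix e' assume e'o: "e' \<in> out_edges G' v'"
    have e': "e' \<in> edges G'" using e'o by (simp add: out_edges_def)
    show "const_near (len G' e') (P e')"
    proof (cases "phiE e'")
      case None then show ?thesis using Pn[OF None] unfolding const_near_def by (intro exI[of _ 1]) simp
    next
      case (Some e)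
      have o: "phiV v' \<in> interior_verts G" "valency G (phiV v') = 1" "out_edges G (phiV v') = {e}"
        using val1[OF v val e'o Some] by auto
      have "const_near (len G e) (fe e)" using FV o by auto
      then have "const_near (len G' e') (\<lambda>x. fe e (dfac G' G phiE e' * x))"
        using dfac_some[OF e' Some] by (intro const_near_scale) auto
      then show ?thesis using Ps[OF Some] by simp
    qed
  qed
  have V2: "pair_smooth (wt G' e1') (P e1') (wt G' e2') (P e2')"
    if v: "v' \<in> interior_verts G'" and val: "valency G' v' = 2" and e1: "e1' \<in> out_edges G' v'"
      and e2: "e2' \<in> out_edges G' v'" and ne: "e1' \<noteq> e2'" for v' e1' e2'
  proof -
    from val2[OF v val e1 e2 ne] show ?thesis
    proof (elim disjE exE conjE)
      assume d1: "deg v' e1'" and d2: "deg v' e2'"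
      show ?thesis unfolding pair_smooth_def
      proof
        fix n show "real (wt G' e1') ^ n * nderiv n (P e1') 0 = (- 1) ^ n * real (wt G' e2') ^ n * nderiv n (P e2') 0"
        proof (cases n)
          case 0 then show ?thesis using P0[OF e1] P0[OF e2] by (simp add: nderiv_def)
        next
          case (Suc m) then show ?thesis using Pd[OF e1 d1] Pd[OF e2 d2] by simp
        qed
      qed
    next
      fix a b c
      assume s1: "phiE e1' = Some a" and s2: "phiE e2' = Some b" and ab: "a \<noteq> b"
        and iv: "phiV v' \<in> interior_verts G" and vv: "valency G (phiV v') = 2"
        and oo: "out_edges G (phiV v') = {a, b}"
        and q1: "real (wt G' e1') * dfac G' G phiE e1' = c * real (wt G a)"
        and q2: "real (wt G' e2') * dfac G' G phiE e2' = c * real (wt G b)"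
      have ps: "pair_smooth (wt G a) (fe a) (wt G b) (fe b)" using FV iv vv oo ab by auto
      have ea: "a \<in> edges G" "b \<in> edges G" using oo by (auto simp: out_edges_def)
      have sa: "smooth_fun (fe a)" "smooth_fun (fe b)" using FE ea by auto
      have na: "nderiv n (P e1') 0 = 1 * dfac G' G phiE e1' ^ n * nderiv n (fe a) 0" for n
        using nderiv_scale[OF sa(1), of n 1 "dfac G' G phiE e1'" 0] Ps[OF s1] by simp
      have nb: "nderiv n (P e2') 0 = 1 * dfac G' G phiE e2' ^ n * nderiv n (fe b) 0" for n
        using nderiv_scale[OF sa(2), of n 1 "dfac G' G phiE e2'" 0] Ps[OF s2] by simp
      show ?thesis unfolding pair_smooth_def na nb
        by (intro allI pair_alg[OF _ q1 q2]) (use ps in \<open>simp add: pair_smooth_def\<close>)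
    qed
  qed
  have V3: "(\<Sum>e'\<in>out_edges G' v'. real (wt G' e') * deriv (P e') 0) = 0"
    if v: "v' \<in> interior_verts G'" for v'
  proof -
    have "(\<Sum>e'\<in>out_edges G' v'. real (wt G' e') * deriv (P e') 0) =
      (\<Sum>e'\<in>out_edges G' v'. (case phiE e' of None \<Rightarrow> 0
      | Some e \<Rightarrow> real (wt G' e') * dfac G' G phiE e' * deriv (fe e) 0))"
    proof (intro sum.cong refl)
      fix e' assume e'o: "e' \<in> out_edges G' v'"
      have e': "e' \<in> edges G'" using e'o by (simp add: out_edges_def)
      show "real (wt G' e') * deriv (P e') 0 = (case phiE e' of None \<Rightarrow> 0
      | Some e \<Rightarrow> real (wt G' e') * dfac G' G phiE e' * deriv (fe e) 0)"
      proof (cases "phiE e'")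
        case None then show ?thesis using Pn[OF None] by simp
      next
        case (Some e)
        have "smooth_fun (fe e)" using FE someE[OF e' Some] by blast
        then have "deriv (\<lambda>x. 1 * fe e (dfac G' G phiE e' * x)) 0 = 1 * dfac G' G phiE e' * deriv (fe e) 0"
          using deriv_scale1[of "fe e" 1 "dfac G' G phiE e'" 0] by simp
        then show ?thesis using Ps[OF Some] Some by simp
      qed
    qed
    also have "\<dots> = 0"
      by (rule regroup[OF v]) (rule van00[OF F])
    finally show ?thesis .
  qed
  have "((\<lambda>v'. fv (phiV v')), P) \<in> A00 G'"
    unfolding A00_def using E V1 V2 V3 by auto
  then show ?thesis using eq by simp
qed


lemma scale_range:
  assumes x: "x \<in> {0..l'}" and d: "(d::real) > 0" "d * l' = L"
  shows "d * x \<in> {0..L} \<and> L - d * x = d * (l' - x)"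
proof -
  have x0: "0 \<le> x" "x \<le> l'" using x by auto
  have "d * x \<le> d * l'" using x0 d(1) by (intro mult_left_mono) auto
  then show ?thesis using d x0 by (auto simp: algebra_simps)
qed

lemma pull1_A1:
  assumes F: "f \<in> A1_coeffs G"
  shows "pull1 G' G phiE f \<in> A1_coeffs G'"
proof -
  define P where "P = pull1 G' G phiE f"
  have Ps: "P e' = (\<lambda>x. f e (dfac G' G phiE e' * x) * dfac G' G phiE e')" if "phiE e' = Some e" for e' e
    using that by (simp add: P_def pull1_def)
  have Pn: "P e' = (\<lambda>x. 0)" if "phiE e' = None" for e'
    using that by (simp add: P_def pull1_def)
  have FE: "\<forall>e\<in>edges G. smooth_fun (f e) \<and>
        (\<forall>x\<in>{0..len G e}. f (rev G e) x = - f e (len G e - x))" using F by (simp add: A1_coeffs_def)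
  have FV: "\<forall>v\<in>interior_verts G.
        (valency G v = 1 \<longrightarrow> (\<forall>e\<in>out_edges G v. zero_near (len G e) (f e))) \<and>
        (valency G v = 2 \<longrightarrow> (\<forall>e1\<in>out_edges G v. \<forall>e2\<in>out_edges G v. e1 \<noteq> e2 \<longrightarrow>
            pair_smooth (wt G e1) (\<lambda>x. real (wt G e1) * f e1 x)
                        (wt G e2) (\<lambda>x. - real (wt G e2) * f e2 x))) \<and>
        (valency G v \<ge> 3 \<longrightarrow> (\<Sum>e\<in>out_edges G v. real (wt G e) * f e 0) = 0)"
    using F by (simp add: A1_coeffs_def)
  have E: "smooth_fun (P e') \<and>
     (\<forall>x\<in>{0..len G' e'}. P (rev G' e') x = - P e' (len G' e' - x))" if e': "e' \<in> edges G'" for e'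
  proof (cases "phiE e'")
    case None
    have n: "phiE (rev G' e') = None" using noneE[OF e' None] by auto
    show ?thesis using smooth_const[of 0] Pn[OF None] Pn[OF n] by simp
  next
    case (Some e)
    have s: "e \<in> edges G" "phiE (rev G' e') = Some (rev G e)"
      using someE[OF e' Some] by auto
    have d: "dfac G' G phiE e' > 0" "dfac G' G phiE e' * len G' e' = len G e"
       "dfac G' G phiE (rev G' e') = dfac G' G phiE e'" using dfac_some[OF e' Some] by auto
    have sm: "smooth_fun (f e)" using FE s(1) by blast
    have "smooth_fun (\<lambda>x. dfac G' G phiE e' * f e (dfac G' G phiE e' * x))" by (rule smooth_scale[OF sm])
    then have 1: "smooth_fun (P e')" using Ps[OF Some] by (simp add: mult.commute)
    have 3: "P (rev G' e') x = - P e' (len G' e' - x)" if x: "x \<in> {0..len G' e'}" for x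
    proof -
      let ?d = "dfac G' G phiE e'"
      have r: "?d * x \<in> {0..len G e}" "len G e - ?d * x = ?d * (len G' e' - x)"
        using scale_range[OF x d(1,2)] by auto
      then have "f (rev G e) (?d * x) = - f e (len G e - ?d * x)" using FE s(1) by blast
      then show ?thesis using r Ps[OF Some] Ps[OF s(2)] d(3) by simp
    qed
    show ?thesis using 1 3 by blast
  qed
  have Pz: "nderiv n (\<lambda>x. k * P e' x) 0 = 0" if "e' \<in> out_edges G' v'" "deg v' e'" for e' v' n k
  proof (cases "phiE e'")
    case None then show ?thesis using Pn[OF None] nderiv_const[of n 0 0] by simp
  next
    case (Some e)
    have e': "e' \<in> edges G'" using that by (simp add: out_edges_def)
    have o: "phiV v' \<in> interior_verts G" "valency G (phiV v') = 1" "out_edges G (phiV v') = {e}"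
      using that(2) Some by (auto simp: deg_def)
    have "zero_near (len G e) (f e)" using FV o by auto
    moreover have ee: "e \<in> edges G" using someE[OF e' Some] by simp
    moreover have "len G e > 0" using wG ee unfolding is_wmgraph_def by auto
    moreover have sm: "smooth_fun (f e)" using FE ee by blast
    ultimately have z: "nderiv n (f e) 0 = 0" using zero_near_nderiv by blast
    have "nderiv n (\<lambda>x. (k * dfac G' G phiE e') * f e (dfac G' G phiE e' * x)) 0 = 0"
      using nderiv_scale[OF sm, of n "k * dfac G' G phiE e'" "dfac G' G phiE e'" 0] z by simp
    moreover have "(\<lambda>x. k * P e' x) = (\<lambda>x. (k * dfac G' G phiE e') * f e (dfac G' G phiE e' * x))"
      using Ps[OF Some] by (simp add: fun_eq_iff)
    ultimately show ?thesis by simp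
  qed
  have V1: "\<forall>e'\<in>out_edges G' v'. zero_near (len G' e') (P e')"
    if v: "v' \<in> interior_verts G'" and val: "valency G' v' = 1" for v'
  proof
    fix e' assume e'o: "e' \<in> out_edges G' v'"
    have e': "e' \<in> edges G'" using e'o by (simp add: out_edges_def)
    show "zero_near (len G' e') (P e')"
    proof (cases "phiE e'")
      case None then show ?thesis using Pn[OF None] unfolding zero_near_def by (intro exI[of _ 1]) simp
    next
      case (Some e)
      have o: "phiV v' \<in> interior_verts G" "valency G (phiV v') = 1" "out_edges G (phiV v') = {e}"
        using val1[OF v val e'o Some] by auto
      have "zero_near (len G e) (f e)" using FV o by auto
      then have "zero_near (len G' e') (\<lambda>x. f e (dfac G' G phiE e' * x) * dfac G' G phiE e')"
        using dfac_some[OF e' Some] by (intro zero_near_scale) auto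
      then show ?thesis using Ps[OF Some] by simp
    qed
  qed
  have V2: "pair_smooth (wt G' e1') (\<lambda>x. real (wt G' e1') * P e1' x)
                        (wt G' e2') (\<lambda>x. - real (wt G' e2') * P e2' x)"
    if v: "v' \<in> interior_verts G'" and val: "valency G' v' = 2" and e1: "e1' \<in> out_edges G' v'"
      and e2: "e2' \<in> out_edges G' v'" and ne: "e1' \<noteq> e2'" for v' e1' e2'
  proof -
    from val2[OF v val e1 e2 ne] show ?thesis
    proof (elim disjE exE conjE)
      assume d1: "deg v' e1'" and d2: "deg v' e2'"
      have z1: "\<forall>n. nderiv n (\<lambda>x. real (wt G' e1') * P e1' x) 0 = 0" using Pz[OF e1 d1] by blast
      have z2: "\<forall>n. nderiv n (\<lambda>x. - real (wt G' e2') * P e2' x) 0 = 0" using Pz[OF e2 d2] by blast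
      show ?thesis unfolding pair_smooth_def by (simp only: z1[rule_format] z2[rule_format] mult_zero_right) simp
    next
      fix a b c
      assume s1: "phiE e1' = Some a" and s2: "phiE e2' = Some b" and ab: "a \<noteq> b"
        and iv: "phiV v' \<in> interior_verts G" and vv: "valency G (phiV v') = 2"
        and oo: "out_edges G (phiV v') = {a, b}"
        and q1: "real (wt G' e1') * dfac G' G phiE e1' = c * real (wt G a)"
        and q2: "real (wt G' e2') * dfac G' G phiE e2' = c * real (wt G b)"
      have ps: "pair_smooth (wt G a) (\<lambda>x. real (wt G a) * f a x) (wt G b) (\<lambda>x. - real (wt G b) * f b x)"
        using FV iv vv oo ab by auto
      have ea: "a \<in> edges G" "b \<in> edges G" using oo by (auto simp: out_edges_def)
      have sa: "smooth_fun (f a)" "smooth_fun (f b)" using FE ea by auto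
      let ?d1 = "dfac G' G phiE e1'" and ?d2 = "dfac G' G phiE e2'"
      have na: "nderiv n (\<lambda>x. real (wt G' e1') * P e1' x) 0 = c * ?d1 ^ n * (real (wt G a) * nderiv n (f a) 0)" for n
      proof -
        have "(\<lambda>x. real (wt G' e1') * P e1' x) = (\<lambda>x. (real (wt G' e1') * ?d1) * f a (?d1 * x))"
          using Ps[OF s1] by (simp add: fun_eq_iff)
        then show ?thesis using nderiv_scale[OF sa(1), of n "real (wt G' e1') * ?d1" ?d1 0] q1 by simp
      qed
      have nb: "nderiv n (\<lambda>x. - real (wt G' e2') * P e2' x) 0 = c * ?d2 ^ n * (- real (wt G b) * nderiv n (f b) 0)" for n
      proof -
        have "(\<lambda>x. - real (wt G' e2') * P e2' x) = (\<lambda>x. (- (real (wt G' e2') * ?d2)) * f b (?d2 * x))"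
          using Ps[OF s2] by (simp add: fun_eq_iff)
        then show ?thesis using nderiv_scale[OF sa(2), of n "- (real (wt G' e2') * ?d2)" ?d2 0] q2 by simp
      qed
      have ps': "\<forall>n. real (wt G a) ^ n * (real (wt G a) * nderiv n (f a) 0) =
         (-1)^n * real (wt G b) ^ n * (- real (wt G b) * nderiv n (f b) 0)"
        using ps unfolding pair_smooth_def nderiv_cmult[OF sa(1)] nderiv_cmult[OF sa(2)] .
      show ?thesis unfolding pair_smooth_def na nb
        by (intro allI pair_alg[OF ps' q1 q2])
    qed
  qed
  have V3: "(\<Sum>e'\<in>out_edges G' v'. real (wt G' e') * P e' 0) = 0"
    if v: "v' \<in> interior_verts G'" for v'
  proof -
    have "(\<Sum>e'\<in>out_edges G' v'. real (wt G' e') * P e' 0) =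
      (\<Sum>e'\<in>out_edges G' v'. (case phiE e' of None \<Rightarrow> 0
      | Some e \<Rightarrow> real (wt G' e') * dfac G' G phiE e' * f e 0))"
    proof (intro sum.cong refl)
      fix e' assume e'o: "e' \<in> out_edges G' v'"
      show "real (wt G' e') * P e' 0 = (case phiE e' of None \<Rightarrow> 0
      | Some e \<Rightarrow> real (wt G' e') * dfac G' G phiE e' * f e 0)"
      proof (cases "phiE e'")
        case None then show ?thesis using Pn[OF None] by simp
      next
        case (Some e) then show ?thesis using Ps[OF Some] by simp
      qed
    qed
    also have "\<dots> = 0"
      by (rule regroup[OF v]) (rule van1[OF F])
    finally show ?thesis .
  qed
  have "P \<in> A1_coeffs G'"
    unfolding A1_coeffs_def using E V1 V2 V3 by auto
  then show ?thesis by (simp add: P_def)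
qed


lemma pull2_A11:
  assumes F: "f \<in> A11 G"
  shows "pull2 G' G phiE f \<in> A11 G'"
proof -
  define P where "P = pull2 G' G phiE f"
  have Ps: "P e' = (\<lambda>x. f e (dfac G' G phiE e' * x) * dfac G' G phiE e' ^ 2)" if "phiE e' = Some e" for e' e
    using that by (simp add: P_def pull2_def)
  have Pn: "P e' = (\<lambda>x. 0)" if "phiE e' = None" for e'
    using that by (simp add: P_def pull2_def)
  have FE: "\<forall>e\<in>edges G. smooth_fun (f e) \<and>
        (\<forall>x\<in>{0..len G e}. f (rev G e) x = f e (len G e - x))" using F by (simp add: A11_def)
  have FV: "\<forall>v\<in>interior_verts G.
        (valency G v = 1 \<longrightarrow> (\<forall>e\<in>out_edges G v. zero_near (len G e) (f e))) \<and>
        (valency G v = 2 \<longrightarrow> (\<forall>e1\<in>out_edges G v. \<forall>e2\<in>out_edges G v. e1 \<noteq> e2 \<longrightarrow>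
            pair_smooth (wt G e1) (\<lambda>x. real (wt G e1) ^ 2 * f e1 x)
                        (wt G e2) (\<lambda>x. real (wt G e2) ^ 2 * f e2 x)))"
    using F by (simp add: A11_def)
  have E: "smooth_fun (P e') \<and>
     (\<forall>x\<in>{0..len G' e'}. P (rev G' e') x = P e' (len G' e' - x))" if e': "e' \<in> edges G'" for e'
  proof (cases "phiE e'")
    case None
    have n: "phiE (rev G' e') = None" using noneE[OF e' None] by auto
    show ?thesis using smooth_const[of 0] Pn[OF None] Pn[OF n] by simp
  next
    case (Some e)
    have s: "e \<in> edges G" "phiE (rev G' e') = Some (rev G e)"
      using someE[OF e' Some] by auto
    have d: "dfac G' G phiE e' > 0" "dfac G' G phiE e' * len G' e' = len G e"
       "dfac G' G phiE (rev G' e') = dfac G' G phiE e'" using dfac_some[OF e' Some] by auto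
    have sm: "smooth_fun (f e)" using FE s(1) by blast
    have "smooth_fun (\<lambda>x. dfac G' G phiE e' ^ 2 * f e (dfac G' G phiE e' * x))" by (rule smooth_scale[OF sm])
    then have 1: "smooth_fun (P e')" using Ps[OF Some] by (simp add: mult.commute)
    have 3: "P (rev G' e') x = P e' (len G' e' - x)" if x: "x \<in> {0..len G' e'}" for x
    proof -
      let ?d = "dfac G' G phiE e'"
      have r: "?d * x \<in> {0..len G e}" "len G e - ?d * x = ?d * (len G' e' - x)"
        using scale_range[OF x d(1,2)] by auto
      then have "f (rev G e) (?d * x) = f e (len G e - ?d * x)" using FE s(1) by blast
      then show ?thesis using r Ps[OF Some] Ps[OF s(2)] d(3) by simp
    qed
    show ?thesis using 1 3 by blast
  qed
  have Pz: "nderiv n (\<lambda>x. k * P e' x) 0 = 0" if "e' \<in> out_edges G' v'" "deg v' e'" for e' v' n k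
  proof (cases "phiE e'")
    case None then show ?thesis using Pn[OF None] nderiv_const[of n 0 0] by simp
  next
    case (Some e)
    have e': "e' \<in> edges G'" using that by (simp add: out_edges_def)
    have o: "phiV v' \<in> interior_verts G" "valency G (phiV v') = 1" "out_edges G (phiV v') = {e}"
      using that(2) Some by (auto simp: deg_def)
    have "zero_near (len G e) (f e)" using FV o by auto
    moreover have ee: "e \<in> edges G" using someE[OF e' Some] by simp
    moreover have "len G e > 0" using wG ee unfolding is_wmgraph_def by auto
    moreover have sm: "smooth_fun (f e)" using FE ee by blast
    ultimately have z: "nderiv n (f e) 0 = 0" using zero_near_nderiv by blast
    have "nderiv n (\<lambda>x. (k * dfac G' G phiE e' ^ 2) * f e (dfac G' G phiE e' * x)) 0 = 0"
      using nderiv_scale[OF sm, of n "k * dfac G' G phiE e' ^ 2" "dfac G' G phiE e'" 0] z by simp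
    moreover have "(\<lambda>x. k * P e' x) = (\<lambda>x. (k * dfac G' G phiE e' ^ 2) * f e (dfac G' G phiE e' * x))"
      using Ps[OF Some] by (simp add: fun_eq_iff)
    ultimately show ?thesis by simp
  qed
  have V1: "\<forall>e'\<in>out_edges G' v'. zero_near (len G' e') (P e')"
    if v: "v' \<in> interior_verts G'" and val: "valency G' v' = 1" for v'
  proof
    fix e' assume e'o: "e' \<in> out_edges G' v'"
    have e': "e' \<in> edges G'" using e'o by (simp add: out_edges_def)
    show "zero_near (len G' e') (P e')"
    proof (cases "phiE e'")
      case None then show ?thesis using Pn[OF None] unfolding zero_near_def by (intro exI[of _ 1]) simp
    next
      case (Some e)
      have o: "phiV v' \<in> interior_verts G" "valency G (phiV v') = 1" "out_edges G (phiV v') = {e}"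
        using val1[OF v val e'o Some] by auto
      have "zero_near (len G e) (f e)" using FV o by auto
      then have "zero_near (len G' e') (\<lambda>x. f e (dfac G' G phiE e' * x) * dfac G' G phiE e' ^ 2)"
        using dfac_some[OF e' Some] by (intro zero_near_scale) auto
      then show ?thesis using Ps[OF Some] by simp
    qed
  qed
  have V2: "pair_smooth (wt G' e1') (\<lambda>x. real (wt G' e1') ^ 2 * P e1' x)
                        (wt G' e2') (\<lambda>x. real (wt G' e2') ^ 2 * P e2' x)"
    if v: "v' \<in> interior_verts G'" and val: "valency G' v' = 2" and e1: "e1' \<in> out_edges G' v'"
      and e2: "e2' \<in> out_edges G' v'" and ne: "e1' \<noteq> e2'" for v' e1' e2'
  proof -
    from val2[OF v val e1 e2 ne] show ?thesis
    proof (elim disjE exE conjE)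
      assume d1: "deg v' e1'" and d2: "deg v' e2'"
      have z1: "\<forall>n. nderiv n (\<lambda>x. real (wt G' e1') ^ 2 * P e1' x) 0 = 0" using Pz[OF e1 d1] by blast
      have z2: "\<forall>n. nderiv n (\<lambda>x. real (wt G' e2') ^ 2 * P e2' x) 0 = 0" using Pz[OF e2 d2] by blast
      show ?thesis unfolding pair_smooth_def by (simp only: z1[rule_format] z2[rule_format] mult_zero_right) simp
    next
      fix a b c
      assume s1: "phiE e1' = Some a" and s2: "phiE e2' = Some b" and ab: "a \<noteq> b"
        and iv: "phiV v' \<in> interior_verts G" and vv: "valency G (phiV v') = 2"
        and oo: "out_edges G (phiV v') = {a, b}"
        and q1: "real (wt G' e1') * dfac G' G phiE e1' = c * real (wt G a)"
        and q2: "real (wt G' e2') * dfac G' G phiE e2' = c * real (wt G b)"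
      have ps: "pair_smooth (wt G a) (\<lambda>x. real (wt G a) ^ 2 * f a x) (wt G b) (\<lambda>x. real (wt G b) ^ 2 * f b x)"
        using FV iv vv oo ab by auto
      have ea: "a \<in> edges G" "b \<in> edges G" using oo by (auto simp: out_edges_def)
      have sa: "smooth_fun (f a)" "smooth_fun (f b)" using FE ea by auto
      let ?d1 = "dfac G' G phiE e1'" and ?d2 = "dfac G' G phiE e2'"
      have q1': "(real (wt G' e1') ^ 2 * ?d1 ^ 2) = c^2 * real (wt G a) ^ 2"
        using q1 by (metis power_mult_distrib)
      have q2': "(real (wt G' e2') ^ 2 * ?d2 ^ 2) = c^2 * real (wt G b) ^ 2"
        using q2 by (metis power_mult_distrib)
      have na: "nderiv n (\<lambda>x. real (wt G' e1') ^ 2 * P e1' x) 0 = c^2 * ?d1 ^ n * (real (wt G a) ^ 2 * nderiv n (f a) 0)" for n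
      proof -
        have "(\<lambda>x. real (wt G' e1') ^ 2 * P e1' x) = (\<lambda>x. (real (wt G' e1') ^ 2 * ?d1 ^ 2) * f a (?d1 * x))"
          using Ps[OF s1] by (simp add: fun_eq_iff)
        then show ?thesis using nderiv_scale[OF sa(1), of n "real (wt G' e1') ^ 2 * ?d1 ^ 2" ?d1 0] q1' by simp
      qed
      have nb: "nderiv n (\<lambda>x. real (wt G' e2') ^ 2 * P e2' x) 0 = c^2 * ?d2 ^ n * (real (wt G b) ^ 2 * nderiv n (f b) 0)" for n
      proof -
        have "(\<lambda>x. real (wt G' e2') ^ 2 * P e2' x) = (\<lambda>x. (real (wt G' e2') ^ 2 * ?d2 ^ 2) * f b (?d2 * x))"
          using Ps[OF s2] by (simp add: fun_eq_iff)
        then show ?thesis using nderiv_scale[OF sa(2), of n "real (wt G' e2') ^ 2 * ?d2 ^ 2" ?d2 0] q2' by simp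
      qed
      have ps': "\<forall>n. real (wt G a) ^ n * (real (wt G a) ^ 2 * nderiv n (f a) 0) =
         (-1)^n * real (wt G b) ^ n * (real (wt G b) ^ 2 * nderiv n (f b) 0)"
        using ps unfolding pair_smooth_def nderiv_cmult[OF sa(1)] nderiv_cmult[OF sa(2)] .
      show ?thesis unfolding pair_smooth_def na nb
        by (intro allI pair_alg[OF ps' q1 q2])
    qed
  qed
  have "P \<in> A11 G'"
    unfolding A11_def using E V1 V2 by auto
  then show ?thesis by (simp add: P_def)
qed

end


lemma id_lin0: "eq_form0 G' (pull0 G' G phiV phiE (lin0 s F t H))
        (lin0 s (pull0 G' G phiV phiE F) t (pull0 G' G phiV phiE H))"
  by (simp add: eq_form0_def eq_coeffs_def pull0_def lin0_def split: option.split)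

lemma id_lin1: "eq_coeffs G' (pull1 G' G phiE (lin1 s a t b)) (lin1 s (pull1 G' G phiE a) t (pull1 G' G phiE b))"
  by (simp add: eq_coeffs_def pull1_def lin1_def algebra_simps split: option.split)

lemma id_lin2: "eq_coeffs G' (pull2 G' G phiE (lin1 s a t b)) (lin1 s (pull2 G' G phiE a) t (pull2 G' G phiE b))"
  by (simp add: eq_coeffs_def pull2_def lin1_def algebra_simps split: option.split)

lemma id_one: "eq_form0 G' (pull0 G' G phiV phiE one0) one0"
  by (simp add: eq_form0_def eq_coeffs_def pull0_def one0_def split: option.split)

lemma id_mult00: "eq_form0 G' (pull0 G' G phiV phiE (mult00 F H))
        (mult00 (pull0 G' G phiV phiE F) (pull0 G' G phiV phiE H))"
  by (simp add: eq_form0_def eq_coeffs_def pull0_def mult00_def split: option.split)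

lemma id_mult1: "eq_coeffs G' (pull1 G' G phiE (mult0 F a)) (mult0 (pull0 G' G phiV phiE F) (pull1 G' G phiE a))"
  by (simp add: eq_coeffs_def pull0_def pull1_def mult0_def algebra_simps split: option.split)

lemma id_mult2: "eq_coeffs G' (pull2 G' G phiE (mult0 F c)) (mult0 (pull0 G' G phiV phiE F) (pull2 G' G phiE c))"
  by (simp add: eq_coeffs_def pull0_def pull2_def mult0_def algebra_simps split: option.split)

lemma id_wedge: "eq_coeffs G' (pull2 G' G phiE (wedge_10_01 a b)) (wedge_10_01 (pull1 G' G phiE a) (pull1 G' G phiE b))"
  by (simp add: eq_coeffs_def pull1_def pull2_def wedge_10_01_def power2_eq_square algebra_simps split: option.split)

lemma id_d0:
  fixes G :: "('v, 'e) wmgraph" and G' :: "('v2, 'e2) wmgraph"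
  assumes wG: "is_wmgraph G" and wG': "is_wmgraph G'" and harm: "harmonic_map G' G phiV phiE"
    and F: "F \<in> A00 G"
  shows "eq_coeffs G' (pull1 G' G phiE (d'_00 F)) (d'_00 (pull0 G' G phiV phiE F))"
  unfolding eq_coeffs_def
proof (intro ballI)
  fix e' x assume e': "e' \<in> edges G'" and x: "x \<in> {0..len G' e'}"
  show "pull1 G' G phiE (d'_00 F) e' x = d'_00 (pull0 G' G phiV phiE F) e' x"
  proof (cases "phiE e'")
    case None then show ?thesis by (simp add: pull1_def pull0_def d'_00_def)
  next
    case (Some e)
    have "e \<in> edges G" using someE[OF wG wG' harm e' Some] by simp
    then have sm: "smooth_fun (snd F e)" using F by (cases F) (simp add: A00_def)
    have "deriv (\<lambda>x. 1 * snd F e (dfac G' G phiE e' * x)) x = 1 * dfac G' G phiE e' * deriv (snd F e) (dfac G' G phiE e' * x)"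
      by (rule deriv_scale1[OF sm])
    then show ?thesis using Some by (simp add: pull1_def pull0_def d'_00_def)
  qed
qed

lemma id_d10:
  fixes G :: "('v, 'e) wmgraph" and G' :: "('v2, 'e2) wmgraph"
  assumes wG: "is_wmgraph G" and wG': "is_wmgraph G'" and harm: "harmonic_map G' G phiV phiE"
    and F: "a \<in> A1_coeffs G"
  shows "eq_coeffs G' (pull2 G' G phiE (d''_10 a)) (d''_10 (pull1 G' G phiE a))"
    and "eq_coeffs G' (pull2 G' G phiE (d'_01 a)) (d'_01 (pull1 G' G phiE a))"
proof -
  have key: "deriv (pull1 G' G phiE a e') x = deriv (a e) (dfac G' G phiE e' * x) * dfac G' G phiE e' ^ 2"
    if e': "e' \<in> edges G'" and Some: "phiE e' = Some e" for e' e x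
  proof -
    have "e \<in> edges G" using someE[OF wG wG' harm e' Some] by simp
    then have sm: "smooth_fun (a e)" using F by (simp add: A1_coeffs_def)
    have "pull1 G' G phiE a e' = (\<lambda>x. dfac G' G phiE e' * a e (dfac G' G phiE e' * x))"
      using Some by (simp add: pull1_def fun_eq_iff mult.commute)
    moreover have "deriv (\<lambda>x. dfac G' G phiE e' * a e (dfac G' G phiE e' * x)) x = dfac G' G phiE e' * dfac G' G phiE e' * deriv (a e) (dfac G' G phiE e' * x)"
      by (rule deriv_scale1[OF sm])
    ultimately show ?thesis by (simp add: power2_eq_square)
  qed
  show "eq_coeffs G' (pull2 G' G phiE (d''_10 a)) (d''_10 (pull1 G' G phiE a))"
    unfolding eq_coeffs_def
  proof (intro ballI)
    fix e' x assume e': "e' \<in> edges G'" and x: "x \<in> {0..len G' e'}"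
    show "pull2 G' G phiE (d''_10 a) e' x = d''_10 (pull1 G' G phiE a) e' x"
    proof (cases "phiE e'")
      case None then show ?thesis by (simp add: pull1_def pull2_def d''_10_def)
    next
      case (Some e) then show ?thesis using key[OF e' Some] by (simp add: pull2_def d''_10_def)
    qed
  qed
  show "eq_coeffs G' (pull2 G' G phiE (d'_01 a)) (d'_01 (pull1 G' G phiE a))"
    unfolding eq_coeffs_def
  proof (intro ballI)
    fix e' x assume e': "e' \<in> edges G'" and x: "x \<in> {0..len G' e'}"
    show "pull2 G' G phiE (d'_01 a) e' x = d'_01 (pull1 G' G phiE a) e' x"
    proof (cases "phiE e'")
      case None then show ?thesis by (simp add: pull1_def pull2_def d'_01_def)
    next
      case (Some e) then show ?thesis using key[OF e' Some] by (simp add: pull2_def d'_01_def)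
    qed
  qed
qed


theorem lemma3p11:
  fixes G :: "('v, 'e) wmgraph" and G' :: "('v2, 'e2) wmgraph"
    and phiV :: "'v2 \<Rightarrow> 'v" and phiE :: "'e2 \<Rightarrow> 'e option"
  assumes "is_wmgraph G" and "is_wmgraph G'"
    and "harmonic_map G' G phiV phiE"
  shows
    \<comment> \<open>phi^* maps A^{p,q}(Sigma) into A^{p,q}(Sigma')\<close>
    "(\<forall>F\<in>A00 G. pull0 G' G phiV phiE F \<in> A00 G') \<and>
     (\<forall>a\<in>A10 G. pull1 G' G phiE a \<in> A10 G') \<and>
     (\<forall>b\<in>A01 G. pull1 G' G phiE b \<in> A01 G') \<and>
     (\<forall>c\<in>A11 G. pull2 G' G phiE c \<in> A11 G') \<and>
     \<comment> \<open>linearity\<close>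
     (\<forall>F\<in>A00 G. \<forall>H\<in>A00 G. \<forall>s t. eq_form0 G'
        (pull0 G' G phiV phiE (lin0 s F t H))
        (lin0 s (pull0 G' G phiV phiE F) t (pull0 G' G phiV phiE H))) \<and>
     (\<forall>a\<in>A10 G. \<forall>b\<in>A10 G. \<forall>s t. eq_coeffs G'
        (pull1 G' G phiE (lin1 s a t b)) (lin1 s (pull1 G' G phiE a) t (pull1 G' G phiE b))) \<and>
     (\<forall>a\<in>A01 G. \<forall>b\<in>A01 G. \<forall>s t. eq_coeffs G'
        (pull1 G' G phiE (lin1 s a t b)) (lin1 s (pull1 G' G phiE a) t (pull1 G' G phiE b))) \<and>
     (\<forall>a\<in>A11 G. \<forall>b\<in>A11 G. \<forall>s t. eq_coeffs G'
        (pull2 G' G phiE (lin1 s a t b)) (lin1 s (pull2 G' G phiE a) t (pull2 G' G phiE b))) \<and>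
     \<comment> \<open>unit and products\<close>
     eq_form0 G' (pull0 G' G phiV phiE one0) one0 \<and>
     (\<forall>F\<in>A00 G. \<forall>H\<in>A00 G. eq_form0 G'
        (pull0 G' G phiV phiE (mult00 F H))
        (mult00 (pull0 G' G phiV phiE F) (pull0 G' G phiV phiE H))) \<and>
     (\<forall>F\<in>A00 G. \<forall>a\<in>A10 G. eq_coeffs G'
        (pull1 G' G phiE (mult0 F a)) (mult0 (pull0 G' G phiV phiE F) (pull1 G' G phiE a))) \<and>
     (\<forall>F\<in>A00 G. \<forall>b\<in>A01 G. eq_coeffs G'
        (pull1 G' G phiE (mult0 F b)) (mult0 (pull0 G' G phiV phiE F) (pull1 G' G phiE b))) \<and>
     (\<forall>F\<in>A00 G. \<forall>c\<in>A11 G. eq_coeffs G'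
        (pull2 G' G phiE (mult0 F c)) (mult0 (pull0 G' G phiV phiE F) (pull2 G' G phiE c))) \<and>
     (\<forall>a\<in>A10 G. \<forall>b\<in>A01 G. eq_coeffs G'
        (pull2 G' G phiE (wedge_10_01 a b)) (wedge_10_01 (pull1 G' G phiE a) (pull1 G' G phiE b))) \<and>
     \<comment> \<open>compatibility with d' and d''\<close>
     (\<forall>F\<in>A00 G. eq_coeffs G'
        (pull1 G' G phiE (d'_00 F)) (d'_00 (pull0 G' G phiV phiE F))) \<and>
     (\<forall>F\<in>A00 G. eq_coeffs G'
        (pull1 G' G phiE (d''_00 F)) (d''_00 (pull0 G' G phiV phiE F))) \<and>
     (\<forall>a\<in>A10 G. eq_coeffs G'
        (pull2 G' G phiE (d''_10 a)) (d''_10 (pull1 G' G phiE a))) \<and>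
     (\<forall>b\<in>A01 G. eq_coeffs G'
        (pull2 G' G phiE (d'_01 b)) (d'_01 (pull1 G' G phiE b)))"
proof -
  have c1: "\<forall>F\<in>A00 G. pull0 G' G phiV phiE F \<in> A00 G'"
  proof
    fix F assume F: "F \<in> A00 G"
    obtain fv fe where "F = (fv, fe)" by (cases F)
    then show "pull0 G' G phiV phiE F \<in> A00 G'" using pull0_A00[OF assms] F by simp
  qed
  have c2: "\<forall>a\<in>A10 G. pull1 G' G phiE a \<in> A10 G'"
    using pull1_A1[OF assms] by (simp add: A10_def)
  have c3: "\<forall>b\<in>A01 G. pull1 G' G phiE b \<in> A01 G'"
    using pull1_A1[OF assms] by (simp add: A01_def)
  have c4: "\<forall>c\<in>A11 G. pull2 G' G phiE c \<in> A11 G'"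
    using pull2_A11[OF assms] by simp
  have c15: "\<forall>F\<in>A00 G. eq_coeffs G'
        (pull1 G' G phiE (d'_00 F)) (d'_00 (pull0 G' G phiV phiE F))"
    using id_d0[OF assms] by blast
  have c16: "\<forall>F\<in>A00 G. eq_coeffs G'
        (pull1 G' G phiE (d''_00 F)) (d''_00 (pull0 G' G phiV phiE F))"
    using id_d0[OF assms] by (simp add: d'_00_def d''_00_def)
  have c17: "\<forall>a\<in>A10 G. eq_coeffs G'
        (pull2 G' G phiE (d''_10 a)) (d''_10 (pull1 G' G phiE a))"
    using id_d10(1)[OF assms] by (simp add: A10_def)
  have c18: "\<forall>b\<in>A01 G. eq_coeffs G'
        (pull2 G' G phiE (d'_01 b)) (d'_01 (pull1 G' G phiE b))"
    using id_d10(2)[OF assms] by (simp add: A01_def)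
  show ?thesis
    by (intro conjI c1 c2 c3 c4 c15 c16 c17 c18 ballI allI id_lin0 id_lin1 id_lin2 id_one id_mult00
        id_mult1 id_mult2 id_wedge)
qed

end
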